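(* Let $x\in\mathbb X$ with $\mathcal R(x)=\inf\{\mathcal R(z):z\in\mathbb X,\ Az=Ax\}$. Then $$\varrho_1(x)=\inf\{\|\omega\|_{\mathbb Y}:\omega\in\mathbb Y,\ A^*\omega\in\partial\mathcal R(x)\}\quad(\inf\emptyset=\infty).$$ Moreover, if this quantity is finite and $x_\alpha\in R_\alpha(Ax)$, $\alpha>0$, is any selection, then $\frac1\alpha(Ax-Ax_\alpha)$ converges weakly in $\mathbb Y$ as $\alpha\searrow0$ to the unique $\omega\in\mathbb Y$ with $A^*\omega\in\partial\mathcal R(x)$ and $\|\omega\|_{\mathbb Y}=\varrho_1(x)$.
   Context: Standing setting: $\mathbb X$ real Banach space, $\tau$ a topology with $(\mathbb X,\tau)$ locally convex Hausdorff; $\mathcal R:\mathbb X\to(-\infty,\infty]$ proper convex with $\tau$-compact sublevel sets; $\mathbb Y$ real Hilbert space; $A:\mathbb X\to\mathbb Y$ linear, $\tau$-to-weak continuous. $T_\alpha(x,g):=\frac1{2\alpha}\|g-Ax\|_{\mathbb Y}^2+\mathcal R(x)$, $R_\alpha(g):=\operatorname{argmin}_{x\in\mathrm{dom}(\mathcal R)}T_\alpha(x,g)$, $\varrho_1(x):=\sup\{\alpha^{-1}\|Ax-Ax_\alpha\|_{\mathbb Y}:\alpha>0,x_\alpha\in R_\alpha(Ax)\}$. The notation $A^*\omega\in\partial\mathcal R(x)$ means $\mathcal R(z)\ge\mathcal R(x)+\langle\omega,A(z-x)\rangle_{\mathbb Y}$ for all $z\in\mathbb X$. *)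

theory Defs
  imports "HOL-Analysis.Analysis"
begin

definition weak_top :: "'b::real_inner topology" where
  "weak_top = topology_generated_by {{y. inner y w \<in> V} | w V. open (V :: real set)}"

definition locally_convex_hausdorff :: "'a::real_vector topology \<Rightarrow> bool" where
  "locally_convex_hausdorff tau \<longleftrightarrow>
     topspace tau = UNIV \<and> Hausdorff_space tau \<and>
     continuous_map (prod_topology tau tau) tau (\<lambda>(x, y). x + y) \<and>
     continuous_map (prod_topology euclideanreal tau) tau (\<lambda>(t, x). t *\<^sub>R x) \<and>
     (\<forall>x U. openin tau U \<and> x \<in> U \<longrightarrow> (\<exists>V. openin tau V \<and> convex V \<and> x \<in> V \<and> V \<subseteq> U))"

definition proper_convex :: "('a::real_vector \<Rightarrow> ereal) \<Rightarrow> bool" where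
  "proper_convex R \<longleftrightarrow>
     (\<forall>x. R x \<noteq> -\<infinity>) \<and> (\<exists>x. R x \<noteq> \<infinity>) \<and>
     (\<forall>x y t. 0 < t \<and> t < 1 \<longrightarrow>
        R (t *\<^sub>R x + (1 - t) *\<^sub>R y) \<le> ereal t * R x + ereal (1 - t) * R y)"

definition dom_R :: "('a \<Rightarrow> ereal) \<Rightarrow> 'a set" where
  "dom_R R = {x. R x \<noteq> \<infinity>}"

definition Tik :: "('a \<Rightarrow> 'b::real_normed_vector) \<Rightarrow> ('a \<Rightarrow> ereal) \<Rightarrow> real \<Rightarrow> 'a \<Rightarrow> 'b \<Rightarrow> ereal" where
  "Tik A R \<alpha> x g = ereal (norm (g - A x)^2 / (2 * \<alpha>)) + R x"

definition Rmin :: "('a \<Rightarrow> 'b::real_normed_vector) \<Rightarrow> ('a \<Rightarrow> ereal) \<Rightarrow> real \<Rightarrow> 'b \<Rightarrow> 'a set" where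
  "Rmin A R \<alpha> g = {x \<in> dom_R R. \<forall>z \<in> dom_R R. Tik A R \<alpha> x g \<le> Tik A R \<alpha> z g}"

definition rho1 :: "('a \<Rightarrow> 'b::real_normed_vector) \<Rightarrow> ('a \<Rightarrow> ereal) \<Rightarrow> 'a \<Rightarrow> ereal" where
  "rho1 A R x = Sup {ereal (norm (A x - A xa) / \<alpha>) | \<alpha> xa. \<alpha> > 0 \<and> xa \<in> Rmin A R \<alpha> (A x)}"

text \<open>A^* omega in the subdifferential of R at x.\<close>
definition adj_subgrad :: "('a::real_vector \<Rightarrow> 'b::real_inner) \<Rightarrow> ('a \<Rightarrow> ereal) \<Rightarrow> 'b \<Rightarrow> 'a \<Rightarrow> bool" where
  "adj_subgrad A R \<omega> x \<longleftrightarrow> (\<forall>z. R z \<ge> R x + ereal (inner \<omega> (A (z - x))))"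

end

theory Submission
  imports Defs
begin


lemma weak_topspace: "topspace (weak_top :: 'b::real_inner topology) = UNIV"
proof -
  have "UNIV \<in> {{y::'b. inner y w \<in> V} | w V. open (V :: real set)}"
    by (rule CollectI, rule exI[of _ 0], rule exI[of _ UNIV]) auto
  then show ?thesis unfolding weak_top_def by auto
qed

lemma weak_open_basic: "open V \<Longrightarrow> openin weak_top {y::'b::real_inner. inner y w \<in> V}"
  unfolding weak_top_def openin_topology_generated_by_iff
  by (rule generate_topology_on.Basis) blast

lemma weak_open_imp_open:
  assumes "openin (weak_top :: 'b::real_inner topology) U" shows "open U"
proof -
  have "generate_topology_on {{y::'b. inner y w \<in> V} | w V. open (V :: real set)} U"
    using assms unfolding weak_top_def openin_topology_generated_by_iff .
  then show ?thesis
  proof induct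
    case (Basis s)
    then obtain w V where s: "s = {y::'b. inner y w \<in> V}" "open V" by blast
    have "continuous_on UNIV (\<lambda>y::'b. inner y w)" by (intro continuous_intros)
    then show ?case unfolding s(1) using s(2) open_vimage by (metis vimage_def)
  qed auto
qed

lemma weak_limit:
  assumes "(f \<longlongrightarrow> l) F" shows "limitin (weak_top :: 'b::real_inner topology) f l F"
  unfolding limitin_def weak_topspace
  using assms weak_open_imp_open topological_tendstoD by blast

lemma weak_closed_ball: assumes "0 \<le> e" shows "closedin (weak_top :: 'b::real_inner topology) {y. norm (y - g) \<le> e}"
proof -
  have "openin weak_top (UNIV - {y::'b. norm (y - g) \<le> e})"
  proof (subst openin_subopen, intro ballI)
    fix y assume y: "y \<in> UNIV - {y::'b. norm (y - g) \<le> e}"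
    then have ne: "norm (y - g) > e" by auto
    define w where "w = y - g"
    define T where "T = {y'::'b. inner y' w \<in> {e * norm w + inner g w <..}}"
    have "openin weak_top T" unfolding T_def by (rule weak_open_basic) simp
    moreover have "y \<in> T"
    proof -
      have "inner y w = inner w w + inner g w" unfolding w_def by (simp add: inner_diff_left)
      moreover have "inner w w = norm w * norm w" by (simp add: power2_eq_square[symmetric] dot_square_norm)
      moreover have "norm w > e" using ne w_def by simp
      moreover have "norm w \<ge> 0" by simp
      moreover have "e * norm w < norm w * norm w"
        using \<open>norm w > e\<close> by (intro mult_strict_right_mono) (use \<open>0 \<le> e\<close> in auto)
      ultimately show ?thesis unfolding T_def by simp
    qed
    moreover have "T \<subseteq> UNIV - {y::'b. norm (y - g) \<le> e}"
    proof
      fix y' assume "y' \<in> T"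
      then have h: "inner (y' - g) w > e * norm w" unfolding T_def by (simp add: inner_diff_left)
      have "inner (y' - g) w \<le> norm (y' - g) * norm w" by (rule norm_cauchy_schwarz)
      with h have "e * norm w < norm (y' - g) * norm w" by linarith
      then have "e < norm (y' - g)" by (simp add: mult_less_cancel_right)
      then show "y' \<in> UNIV - {y::'b. norm (y - g) \<le> e}" by auto
    qed
    ultimately show "\<exists>T. openin weak_top T \<and> y \<in> T \<and> T \<subseteq> UNIV - {y. norm (y - g) \<le> e}" by blast
  qed
  then show ?thesis unfolding closedin_def weak_topspace by simp
qed

lemma nested_compact:
  assumes K: "compactin X K" and C: "\<And>n. closedin X (C n)" "\<And>n. C n \<subseteq> K"
    "\<And>n. C (Suc n) \<subseteq> C n" "\<And>n. C n \<noteq> {}"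
  shows "\<exists>z. \<forall>n. z \<in> C n"
proof -
  have dec: "decseq C" using C(3) by (rule decseq_SucI)
  have "K \<inter> \<Inter>(range C) \<noteq> {}"
  proof (rule compactin_fip[THEN iffD1, OF K, THEN conjunct2, rule_format], intro conjI allI impI)
    show "\<forall>D\<in>range C. closedin X D" using C(1) by auto
  next
    fix F assume F: "finite F \<and> F \<subseteq> range C"
    then obtain N where N: "finite N" "F = C ` N" by (meson finite_subset_image)
    have "C (Max (insert 0 N)) \<subseteq> C n" if "n \<in> N" for n
      using dec that N(1) by (simp add: decseq_def)
    then have "C (Max (insert 0 N)) \<subseteq> K \<inter> \<Inter>F"
      using N C(2) by auto
    then show "K \<inter> \<Inter>F \<noteq> {}" using C(4) by blast
  qed
  then show ?thesis by blast
qed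



locale setting =
  fixes tau :: "'a::banach topology"
    and R :: "'a \<Rightarrow> ereal"
    and A :: "'a \<Rightarrow> 'b::{real_inner, complete_space}"
  assumes tau: "locally_convex_hausdorff tau"
    and R_pc: "proper_convex R"
    and R_cpt: "\<forall>c::real. compactin tau {z. R z \<le> ereal c}"
    and A_lin: "linear A"
    and A_cont: "continuous_map tau weak_top A"
begin

lemma R_nm: "R z \<noteq> -\<infinity>" using R_pc unfolding proper_convex_def by blast

lemma dom_ne: "\<exists>z. R z \<noteq> \<infinity>" using R_pc unfolding proper_convex_def by blast

lemma tau_top: "topspace tau = UNIV" and tau_H: "Hausdorff_space tau"
  using tau unfolding locally_convex_hausdorff_def by auto

lemma closed_sub: "closedin tau {z. R z \<le> ereal c}"
  using R_cpt tau_H compactin_imp_closedin by blast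

lemma closed_res:
  assumes "0 \<le> e" shows "closedin tau {z. norm (A z - g) \<le> e}"
  using closedin_continuous_map_preimage[OF A_cont weak_closed_ball[OF assms, of g]] tau_top
  by simp

lemma open_res: "openin tau {z. s < norm (g - A z)^2 / (2 * \<alpha>)}" if "\<alpha> > 0" for s
proof (cases "s < 0")
  case True
  then have "{z. s < norm (g - A z)^2 / (2 * \<alpha>)} = topspace tau"
    using tau_top that by (auto intro: less_le_trans[of _ 0])
  then show ?thesis by simp
next
  case False
  have "{z. s < norm (g - A z)^2 / (2 * \<alpha>)} = topspace tau - {z. norm (A z - g) \<le> sqrt (2 * \<alpha> * s)}"
  proof -
    have "norm (g - A z)^2 / (2 * \<alpha>) \<le> s \<longleftrightarrow> norm (A z - g) \<le> sqrt (2 * \<alpha> * s)" for z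
    proof -
      have "norm (g - A z)^2 / (2 * \<alpha>) \<le> s \<longleftrightarrow> norm (A z - g)^2 \<le> 2 * \<alpha> * s"
        using that by (simp add: norm_minus_commute divide_le_eq mult.commute)
      also have "\<dots> \<longleftrightarrow> norm (A z - g) \<le> sqrt (2 * \<alpha> * s)"
      proof
        assume "norm (A z - g)^2 \<le> 2 * \<alpha> * s" then show "norm (A z - g) \<le> sqrt (2 * \<alpha> * s)" by (rule real_le_rsqrt)
      next
        assume h: "norm (A z - g) \<le> sqrt (2 * \<alpha> * s)"
        have "norm (A z - g)^2 \<le> (sqrt (2 * \<alpha> * s))^2" using h by (intro power_mono) auto
        also have "\<dots> = 2 * \<alpha> * s" using False that by simp
        finally show "norm (A z - g)^2 \<le> 2 * \<alpha> * s" .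
      qed
      finally show ?thesis .
    qed
    then have "s < norm (g - A z)^2 / (2 * \<alpha>) \<longleftrightarrow> \<not> norm (A z - g) \<le> sqrt (2 * \<alpha> * s)" for z
      by (metis not_le)
    then show ?thesis using tau_top by auto
  qed
  then show ?thesis using closed_res False that by (auto intro!: openin_diff)
qed

lemma closed_Tik:
  assumes a: "\<alpha> > 0" shows "closedin tau {z. Tik A R \<alpha> z g \<le> ereal t}"
proof -
  have "openin tau {z. ereal t < Tik A R \<alpha> z g}"
  proof (subst openin_subopen, intro ballI)
    fix z0 assume "z0 \<in> {z. ereal t < Tik A R \<alpha> z g}"
    then have z0: "ereal t < ereal (norm (g - A z0)^2 / (2 * \<alpha>)) + R z0" by (simp add: Tik_def)
    define f0 where "f0 = norm (g - A z0)^2 / (2 * \<alpha>)"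
    have "\<exists>s. s < f0 \<and> ereal (t - s) < R z0"
    proof (cases "R z0")
      case (real r)
      then have "t < f0 + r" using z0 by (simp add: f0_def)
      moreover have "t - (f0 + t - r)/2 < r" "(f0 + t - r)/2 < f0" using \<open>t < f0 + r\<close> by (simp_all add: field_simps)
      ultimately show ?thesis using real by (intro exI[of _ "(f0 + t - r)/2"]) auto
    next
      case PInf then show ?thesis by (intro exI[of _ "f0 - 1"]) auto
    next
      case MInf then show ?thesis using R_nm by blast
    qed
    then obtain s where s: "s < f0" "ereal (t - s) < R z0" by blast
    define Ov where "Ov = {z. s < norm (g - A z)^2 / (2 * \<alpha>)} \<inter> (topspace tau - {z. R z \<le> ereal (t - s)})"
    have "openin tau Ov" unfolding Ov_def using open_res[OF a] closed_sub by (intro openin_Int openin_diff) auto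
    moreover have "z0 \<in> Ov" using s tau_top unfolding Ov_def f0_def by auto
    moreover have "Ov \<subseteq> {z. ereal t < Tik A R \<alpha> z g}"
    proof
      fix z assume "z \<in> Ov"
      then have h: "s < norm (g - A z)^2 / (2 * \<alpha>)" "ereal (t - s) < R z" unfolding Ov_def by auto
      show "z \<in> {z. ereal t < Tik A R \<alpha> z g}"
      proof (cases "R z")
        case (real r) then show ?thesis using h by (simp add: Tik_def)
      next
        case PInf then show ?thesis by (simp add: Tik_def)
      next
        case MInf then show ?thesis using R_nm by blast
      qed
    qed
    ultimately show "\<exists>T. openin tau T \<and> z0 \<in> T \<and> T \<subseteq> {z. ereal t < Tik A R \<alpha> z g}" by blast
  qed
  then have "closedin tau (topspace tau - {z. ereal t < Tik A R \<alpha> z g})" by auto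
  moreover have "topspace tau - {z. ereal t < Tik A R \<alpha> z g} = {z. Tik A R \<alpha> z g \<le> ereal t}"
    using tau_top by (auto simp: not_less)
  ultimately show ?thesis by simp
qed

end


lemma eps_le: fixes a b K :: real
  assumes "\<And>t. 0 < t \<Longrightarrow> t < 1 \<Longrightarrow> a \<le> b + t * K" and "0 \<le> K" shows "a \<le> b"
proof (rule ccontr)
  assume "\<not> a \<le> b"
  then have g: "a - b > 0" by simp
  define t where "t = min (1/2) ((a - b) / (2 * (K + 1)))"
  have t: "0 < t" "t < 1" using g assms(2) by (auto simp: t_def)
  have "t * K \<le> ((a - b) / (2 * (K + 1))) * K" using assms(2) by (intro mult_right_mono) (auto simp: t_def)
  also have "\<dots> < a - b"
  proof -
    have "(a - b) * K < (a - b) * (2 * (K + 1))" using g assms(2) by (intro mult_strict_left_mono) auto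
    then show ?thesis using assms(2) by (simp add: field_simps)
  qed
  finally show False using assms(1)[OF t] by linarith
qed

lemma inv_small: fixes v :: real assumes "\<And>n. v \<le> inverse (real (Suc n))" shows "v \<le> 0"
proof (rule ccontr)
  assume "\<not> v \<le> 0"
  then obtain n where "inverse (real (Suc n)) < v" using reals_Archimedean[of v] by auto
  then show False using assms[of n] by simp
qed

context setting begin

lemma R_le_Tik: "\<alpha> > 0 \<Longrightarrow> R z \<le> Tik A R \<alpha> z g"
  unfolding Tik_def by (cases "R z") auto

lemma Tik_nm: "Tik A R \<alpha> z g \<noteq> -\<infinity>"
  using R_nm[of z] unfolding Tik_def by (cases "R z") auto

lemma exists_min:
  assumes a: "\<alpha> > 0" shows "\<exists>xa. xa \<in> Rmin A R \<alpha> g"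
proof -
  let ?T = "\<lambda>z. Tik A R \<alpha> z g"
  obtain z0 where z0: "R z0 \<noteq> \<infinity>" using dom_ne by blast
  have z0d: "z0 \<in> dom_R R" using z0 by (simp add: dom_R_def)
  define m where "m = Inf (?T ` dom_R R)"
  have mT: "m \<le> ?T w" if "w \<in> dom_R R" for w unfolding m_def using that by (rule INF_lower)
  have "?T z0 \<noteq> \<infinity>" using z0 R_nm[of z0] by (cases "R z0") (auto simp: Tik_def)
  then have m_ninf: "m \<noteq> \<infinity>" using mT[OF z0d] by (metis ereal_infty_less_eq(1))
  have m_nminf: "m \<noteq> -\<infinity>"
  proof
    assume mm: "m = -\<infinity>"
    define C where "C n = {z. ?T z \<le> ereal (- real n)}" for n
    have "\<exists>z. \<forall>n. z \<in> C n"
    proof (rule nested_compact[of tau "{z. R z \<le> ereal 0}"])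
      show "compactin tau {z. R z \<le> ereal 0}" using R_cpt by blast
      show "closedin tau (C n)" for n unfolding C_def by (rule closed_Tik[OF a])
      show "C n \<subseteq> {z. R z \<le> ereal 0}" for n
      proof
        fix z assume "z \<in> C n"
        then have "?T z \<le> ereal (- real n)" unfolding C_def by simp
        moreover have "ereal (- real n) \<le> ereal 0" by simp
        ultimately have "R z \<le> ereal 0" using R_le_Tik[OF a, of z] by (meson order.trans)
        then show "z \<in> {z. R z \<le> ereal 0}" by simp
      qed
      show "C (Suc n) \<subseteq> C n" for n
      proof
        fix z assume "z \<in> C (Suc n)"
        then have "?T z \<le> ereal (- real (Suc n))" unfolding C_def by simp
        moreover have "ereal (- real (Suc n)) \<le> ereal (- real n)" by simp
        ultimately show "z \<in> C n" unfolding C_def by (meson order.trans mem_Collect_eq)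
      qed
      show "C n \<noteq> {}" for n
      proof -
        have "m < ereal (- real n)" using mm by simp
        then obtain z where "z \<in> dom_R R" "?T z < ereal (- real n)" unfolding m_def INF_less_iff by blast
        then show ?thesis unfolding C_def by (blast intro: less_imp_le)
      qed
    qed
    then obtain z where z: "\<And>n. ?T z \<le> ereal (- real n)" unfolding C_def by blast
    show False
    proof (cases "?T z")
      case (real v)
      obtain n where "- v < real n" using reals_Archimedean2 by blast
      then show False using z[of n] real by simp
    next
      case PInf then show False using z[of 0] by simp
    next
      case MInf then show False using Tik_nm by blast
    qed
  qed
  obtain mr where mr: "m = ereal mr" using m_ninf m_nminf by (cases m) auto
  define C where "C n = {z. ?T z \<le> ereal (mr + inverse (real (Suc n)))}" for n
  have "\<exists>z. \<forall>n. z \<in> C n"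
  proof (rule nested_compact[of tau "{z. R z \<le> ereal (mr + 1)}"])
    show "compactin tau {z. R z \<le> ereal (mr + 1)}" using R_cpt by blast
    show "closedin tau (C n)" for n unfolding C_def by (rule closed_Tik[OF a])
    show "C n \<subseteq> {z. R z \<le> ereal (mr + 1)}" for n
    proof
      fix z assume "z \<in> C n"
      then have "?T z \<le> ereal (mr + inverse (real (Suc n)))" unfolding C_def by simp
      then have "R z \<le> ereal (mr + inverse (real (Suc n)))" using R_le_Tik[OF a, of z] by (meson order.trans)
      also have "\<dots> \<le> ereal (mr + 1)" by (simp add: inverse_le_1_iff)
      finally show "z \<in> {z. R z \<le> ereal (mr + 1)}" by simp
    qed
    show "C (Suc n) \<subseteq> C n" for n
    proof
      fix z assume "z \<in> C (Suc n)"
      then have "?T z \<le> ereal (mr + inverse (real (Suc (Suc n))))" unfolding C_def by simp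
      moreover have "inverse (real (Suc (Suc n))) \<le> inverse (real (Suc n))" by (simp add: le_imp_inverse_le)
      then have "ereal (mr + inverse (real (Suc (Suc n)))) \<le> ereal (mr + inverse (real (Suc n)))" by simp
      ultimately show "z \<in> C n" unfolding C_def by (meson order.trans mem_Collect_eq)
    qed
    show "C n \<noteq> {}" for n
    proof -
      have "m < ereal (mr + inverse (real (Suc n)))" using mr by simp
      then obtain z where "z \<in> dom_R R" "?T z < ereal (mr + inverse (real (Suc n)))" unfolding m_def INF_less_iff by blast
      then show ?thesis unfolding C_def by (blast intro: less_imp_le)
    qed
  qed
  then obtain z where z: "\<And>n. ?T z \<le> ereal (mr + inverse (real (Suc n)))" unfolding C_def by blast
  have Tz: "?T z \<le> m"
  proof (cases "?T z")
    case (real v)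
    have "v - mr \<le> 0" using z real by (intro inv_small) (simp add: algebra_simps)
    then show ?thesis using real mr by simp
  next
    case PInf then show ?thesis using z[of 0] by simp
  next
    case MInf then show ?thesis using Tik_nm by blast
  qed
  have "R z \<le> ereal mr" using R_le_Tik[OF a, of z] Tz mr by (metis order.trans)
  then have "z \<in> dom_R R" unfolding dom_R_def by (metis PInfty_neq_ereal(1) ereal_infty_less_eq(1) mem_Collect_eq)
  moreover have "\<forall>w \<in> dom_R R. ?T z \<le> ?T w" using Tz mT by (meson order.trans)
  ultimately show ?thesis unfolding Rmin_def by blast
qed

end


lemma norm_sub_scale_sq: "norm (r - t *\<^sub>R d)^2 = norm r^2 - 2*t*inner r d + t^2 * norm (d::'b::real_inner)^2"
  unfolding power2_norm_eq_inner
  by (simp add: inner_diff_left inner_diff_right inner_commute[of d r] power2_eq_square algebra_simps)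

context setting begin

lemma subgrad_min:
  assumes a: "\<alpha> > 0" and xa: "xa \<in> Rmin A R \<alpha> g"
  shows "R xa + ereal (inner ((1/\<alpha>) *\<^sub>R (g - A xa)) (A (z - xa))) \<le> R z"
proof -
  have xad: "xa \<in> dom_R R" and xmin: "\<And>w. w \<in> dom_R R \<Longrightarrow> Tik A R \<alpha> xa g \<le> Tik A R \<alpha> w g"
    using xa unfolding Rmin_def by auto
  obtain ra where ra: "R xa = ereal ra" using xad R_nm[of xa] unfolding dom_R_def by (cases "R xa") auto
  define r where "r = g - A xa"
  define d where "d = A z - A xa"
  have Adiff: "A (z - xa) = d" unfolding d_def by (simp add: linear_diff[OF A_lin])
  show ?thesis
  proof (cases "R z")
    case PInf then show ?thesis by simp
  next
    case MInf then show ?thesis using R_nm by blast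
  next
    case (real rz)
    have main: "ra + inner r d / \<alpha> \<le> rz + t * (norm d ^ 2 / (2 * \<alpha>))" if t: "0 < t" "t < 1" for t
    proof -
      define zt where "zt = t *\<^sub>R z + (1 - t) *\<^sub>R xa"
      have "R zt \<le> ereal t * R z + ereal (1 - t) * R xa"
        using R_pc t unfolding proper_convex_def zt_def by blast
      then have Rzt: "R zt \<le> ereal (t * rz + (1 - t) * ra)" using real ra by simp
      obtain rt where rt: "R zt = ereal rt" using Rzt R_nm[of zt] by (cases "R zt") auto
      have rtle: "rt \<le> t * rz + (1 - t) * ra" using Rzt rt by simp
      have "zt \<in> dom_R R" using rt unfolding dom_R_def by simp
      from xmin[OF this] have "ereal (norm (g - A xa)^2 / (2*\<alpha>)) + ereal ra \<le> ereal (norm (g - A zt)^2 / (2*\<alpha>)) + ereal rt"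
        unfolding Tik_def using ra rt by simp
      then have H: "norm r^2 / (2*\<alpha>) + ra \<le> norm (g - A zt)^2 / (2*\<alpha>) + rt" unfolding r_def by simp
      have "A zt = t *\<^sub>R A z + (1 - t) *\<^sub>R A xa"
        unfolding zt_def by (simp add: linear_add[OF A_lin] linear_scale[OF A_lin])
      then have "g - A zt = r - t *\<^sub>R d" unfolding r_def d_def by (simp add: algebra_simps)
      then have "norm (g - A zt)^2 = norm r^2 - 2 * t * inner r d + t^2 * norm d^2"
        using norm_sub_scale_sq by metis
      then have "norm (g - A zt)^2 / (2*\<alpha>) = norm r^2 / (2*\<alpha>) - t * (inner r d / \<alpha>) + t * (t * (norm d ^ 2 / (2 * \<alpha>)))"
        using a by (simp add: field_simps power2_eq_square)
      with H rtle have "0 \<le> t * (- (inner r d / \<alpha>) + t * (norm d ^ 2 / (2 * \<alpha>)) + rz - ra)"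
        by (simp add: algebra_simps)
      then have "0 \<le> - (inner r d / \<alpha>) + t * (norm d ^ 2 / (2 * \<alpha>)) + rz - ra"
        using t by (simp add: zero_le_mult_iff)
      then show ?thesis by linarith
    qed
    have "ra + inner r d / \<alpha> \<le> rz"
      by (rule eps_le[OF main]) (use a in auto)
    then show ?thesis using real ra unfolding Adiff r_def[symmetric] by simp
  qed
qed

lemma subgrad_mono:
  assumes "adj_subgrad A R u p" "adj_subgrad A R v q" "R p \<noteq> \<infinity>" "R q \<noteq> \<infinity>"
  shows "0 \<le> inner (u - v) (A p - A q)"
proof -
  obtain rp rq where rp: "R p = ereal rp" and rq: "R q = ereal rq"
    using assms(3,4) R_nm[of p] R_nm[of q] by (cases "R p"; cases "R q") auto
  have "R p + ereal (inner u (A (q - p))) \<le> R q" "R q + ereal (inner v (A (p - q))) \<le> R p"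
    using assms(1,2) unfolding adj_subgrad_def by auto
  then have "rp + inner u (A q - A p) \<le> rq" "rq + inner v (A p - A q) \<le> rp"
    using rp rq by (simp_all add: linear_diff[OF A_lin])
  moreover have "inner u (A q - A p) = - inner u (A p - A q)" by (simp add: inner_diff_right)
  ultimately show ?thesis by (simp add: inner_diff_left)
qed

lemma key:
  assumes xm: "R x = Inf {R z | z. A z = A x}"
    and h: "\<And>e. e > 0 \<Longrightarrow> \<exists>z. R z \<le> ereal c \<and> norm (A z - A x) \<le> e"
  shows "R x \<le> ereal c"
proof -
  define C where "C n = {z. R z \<le> ereal c} \<inter> {z. norm (A z - A x) \<le> inverse (real (Suc n))}" for n
  have "\<exists>z. \<forall>n. z \<in> C n"
  proof (rule nested_compact[of tau "{z. R z \<le> ereal c}"])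
    show "compactin tau {z. R z \<le> ereal c}" using R_cpt by blast
    show "closedin tau (C n)" for n unfolding C_def
      by (intro closedin_Int closed_sub closed_res) simp
    show "C n \<subseteq> {z. R z \<le> ereal c}" for n unfolding C_def by blast
    show "C (Suc n) \<subseteq> C n" for n
    proof -
      have le: "inverse (real (Suc (Suc n))) \<le> inverse (real (Suc n))" by (simp add: le_imp_inverse_le)
      show ?thesis
      proof
        fix z assume "z \<in> C (Suc n)"
        then have "R z \<le> ereal c" "norm (A z - A x) \<le> inverse (real (Suc (Suc n)))" unfolding C_def by simp_all
        then show "z \<in> C n" unfolding C_def using le by (meson IntI mem_Collect_eq order.trans)
      qed
    qed
    show "C n \<noteq> {}" for n using h[of "inverse (real (Suc n))"] unfolding C_def by auto
  qed
  then obtain z where z: "\<And>n. z \<in> C n" by blast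
  have "norm (A z - A x) \<le> 0" using z unfolding C_def by (intro inv_small) auto
  then have "A z = A x" by simp
  then have "R x \<le> R z" unfolding xm by (intro Inf_lower) blast
  also have "R z \<le> ereal c" using z[of 0] unfolding C_def by simp
  finally show ?thesis .
qed

end


lemma ident2: "2 * inner (a - b) (\<alpha> *\<^sub>R a - \<beta> *\<^sub>R b) = (\<alpha>+\<beta>) * norm (a-b)^2 + (\<alpha>-\<beta>)*(norm a^2 - norm (b::'b::real_inner)^2)"
  unfolding power2_norm_eq_inner
  by (simp add: inner_diff_left inner_diff_right inner_commute[of b a] algebra_simps)

lemma para_mid: "norm ((1/2) *\<^sub>R (a + b))^2 = (norm a^2 + norm b^2)/2 - norm (a - (b::'b::real_inner))^2/4"
  unfolding power2_norm_eq_inner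
  by (simp add: inner_add_left inner_add_right inner_diff_left inner_diff_right inner_commute[of b a] algebra_simps) (simp add: field_simps)

lemma half_le: assumes "a + p \<le> c" "a + q \<le> c" shows "a + (p+q)/2 \<le> (c::real)"
proof -
  have "a + (p+q)/2 = ((a+p)+(a+q))/2" by (simp add: field_simps)
  also have "\<dots> \<le> (c + c)/2" using assms by (intro divide_right_mono add_mono) auto
  finally show ?thesis by simp
qed

context setting begin

definition Wv :: "'a \<Rightarrow> real \<Rightarrow> 'a \<Rightarrow> 'b" where
  "Wv x \<alpha> xa = (1/\<alpha>) *\<^sub>R (A x - A xa)"

lemma Rmin_fin: "xa \<in> Rmin A R \<alpha> g \<Longrightarrow> R xa \<noteq> \<infinity>"
  unfolding Rmin_def dom_R_def by auto

lemma M1: assumes "\<alpha> > 0" "xa \<in> Rmin A R \<alpha> (A x)" shows "adj_subgrad A R (Wv x \<alpha> xa) xa"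
  unfolding adj_subgrad_def Wv_def using subgrad_min[OF assms] by blast

lemma Aeq: "\<alpha> > 0 \<Longrightarrow> A xa = A x - \<alpha> *\<^sub>R Wv x \<alpha> xa"
  unfolding Wv_def by simp

lemma subgrad_fin: assumes "adj_subgrad A R m p" shows "R p \<noteq> \<infinity>"
proof
  assume "R p = \<infinity>"
  obtain z0 where "R z0 \<noteq> \<infinity>" using dom_ne by blast
  moreover have "R p + ereal (inner m (A (z0 - p))) \<le> R z0" using assms unfolding adj_subgrad_def by blast
  ultimately show False using \<open>R p = \<infinity>\<close> by simp
qed

lemma M2:
  assumes a: "\<alpha> > 0" "\<beta> > 0" and xa: "xa \<in> Rmin A R \<alpha> (A x)" and xb: "xb \<in> Rmin A R \<beta> (A x)"
  shows "(\<alpha>+\<beta>) * norm (Wv x \<alpha> xa - Wv x \<beta> xb)^2 \<le> (\<beta>-\<alpha>) * (norm (Wv x \<alpha> xa)^2 - norm (Wv x \<beta> xb)^2)"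
proof -
  let ?a = "Wv x \<alpha> xa" and ?b = "Wv x \<beta> xb"
  have eq: "A xa - A xb = - (\<alpha> *\<^sub>R ?a - \<beta> *\<^sub>R ?b)" using Aeq[OF a(1), where x=x and xa=xa] Aeq[OF a(2), where x=x and xa=xb] by simp
  have "0 \<le> inner (?a - ?b) (A xa - A xb)"
    by (rule subgrad_mono[OF M1[OF a(1) xa] M1[OF a(2) xb] Rmin_fin[OF xa] Rmin_fin[OF xb]])
  then have "inner (?a - ?b) (\<alpha> *\<^sub>R ?a - \<beta> *\<^sub>R ?b) \<le> 0" unfolding eq inner_minus_right by simp
  then have "(\<alpha>+\<beta>) * norm (?a - ?b)^2 + (\<alpha>-\<beta>)*(norm ?a^2 - norm ?b^2) \<le> 0" using ident2[of ?a ?b \<alpha> \<beta>] by linarith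
  moreover have "(\<beta>-\<alpha>)*(norm ?a^2 - norm ?b^2) = - ((\<alpha>-\<beta>)*(norm ?a^2 - norm ?b^2))" by (simp add: algebra_simps)
  ultimately show ?thesis by linarith
qed

lemma M3:
  assumes m: "adj_subgrad A R m x" and a: "\<alpha> > 0" and xa: "xa \<in> Rmin A R \<alpha> (A x)"
  shows "norm (Wv x \<alpha> xa) \<le> norm m"
proof -
  let ?a = "Wv x \<alpha> xa"
  have "0 \<le> inner (?a - m) (A xa - A x)"
    by (rule subgrad_mono[OF M1[OF a xa] m Rmin_fin[OF xa] subgrad_fin[OF m]])
  also have "A xa - A x = - (\<alpha> *\<^sub>R ?a)" using Aeq[OF a, where x=x and xa=xa] by simp
  finally have "0 \<le> - \<alpha> * (inner ?a ?a - inner m ?a)" by (simp add: inner_diff_left)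
  then have "inner ?a ?a \<le> inner m ?a" using a by (simp add: mult_le_0_iff)
  also have "\<dots> \<le> norm m * norm ?a" by (rule norm_cauchy_schwarz)
  finally have "norm ?a * norm ?a \<le> norm m * norm ?a" by (simp add: power2_eq_square[symmetric] dot_square_norm)
  then show ?thesis
    by (cases "norm ?a = 0") (auto simp: mult_le_cancel_right)
qed

lemma rho1_ge: assumes "\<alpha> > 0" "xa \<in> Rmin A R \<alpha> (A x)" shows "ereal (norm (Wv x \<alpha> xa)) \<le> rho1 A R x"
proof -
  have "norm (Wv x \<alpha> xa) = norm (A x - A xa) / \<alpha>" using assms(1) unfolding Wv_def by simp
  then show ?thesis unfolding rho1_def using assms by (intro Sup_upper) blast
qed

lemma rho1_le: assumes "\<And>\<alpha> xa. \<alpha> > 0 \<Longrightarrow> xa \<in> Rmin A R \<alpha> (A x) \<Longrightarrow> norm (Wv x \<alpha> xa) \<le> b"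
  shows "rho1 A R x \<le> ereal b"
  unfolding rho1_def
proof (rule Sup_least)
  fix y assume "y \<in> {ereal (norm (A x - A xa) / \<alpha>) |\<alpha> xa. 0 < \<alpha> \<and> xa \<in> Rmin A R \<alpha> (A x)}"
  then obtain \<alpha> xa where y: "y = ereal (norm (A x - A xa) / \<alpha>)" "\<alpha> > 0" "xa \<in> Rmin A R \<alpha> (A x)" by blast
  have "norm (Wv x \<alpha> xa) = norm (A x - A xa) / \<alpha>" using y(2) unfolding Wv_def by simp
  then show "y \<le> ereal b" using assms[OF y(2,3)] y(1) by simp
qed

lemma rho1_le_subgrad: "adj_subgrad A R m x \<Longrightarrow> rho1 A R x \<le> ereal (norm m)"
  by (rule rho1_le) (rule M3)

lemma mid_subgrad:
  assumes "adj_subgrad A R m x" "adj_subgrad A R m' x"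
  shows "adj_subgrad A R ((1/2) *\<^sub>R (m + m')) x"
  unfolding adj_subgrad_def
proof
  fix z
  obtain rx where rx: "R x = ereal rx" using subgrad_fin[OF assms(1)] R_nm[of x] by (cases "R x") auto
  have h1: "R x + ereal (inner m (A (z - x))) \<le> R z" and h2: "R x + ereal (inner m' (A (z - x))) \<le> R z"
    using assms unfolding adj_subgrad_def by blast+
  show "R x + ereal (inner ((1/2) *\<^sub>R (m + m')) (A (z - x))) \<le> R z"
  proof (cases "R z")
    case (real rz)
    let ?p = "inner m (A (z - x))" and ?q = "inner m' (A (z - x))"
    have "rx + ?p \<le> rz" "rx + ?q \<le> rz" using h1 h2 rx real by simp_all
    then have "rx + (?p + ?q)/2 \<le> rz" by (rule half_le)
    then show ?thesis using rx real by (simp add: inner_add_left)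
  next
    case PInf then show ?thesis by simp
  next
    case MInf then show ?thesis using R_nm by blast
  qed
qed

end


context setting begin

lemma construct:
  assumes xm: "R x = Inf {R z | z. A z = A x}" and fin: "rho1 A R x \<noteq> \<infinity>"
  shows "\<exists>\<omega>. adj_subgrad A R \<omega> x \<and> ereal (norm \<omega>) = rho1 A R x \<and>
     (\<forall>xs. (\<forall>\<alpha>>0. xs \<alpha> \<in> Rmin A R \<alpha> (A x)) \<longrightarrow> ((\<lambda>\<alpha>. (1 / \<alpha>) *\<^sub>R (A x - A (xs \<alpha>))) \<longlongrightarrow> \<omega>) (at_right 0))"
proof -
  define xs0 where "xs0 \<alpha> = (SOME xa. xa \<in> Rmin A R \<alpha> (A x))" for \<alpha>
  have xs0: "xs0 \<alpha> \<in> Rmin A R \<alpha> (A x)" if "\<alpha> > 0" for \<alpha>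
    unfolding xs0_def using exists_min[OF that] by (rule someI_ex)
  define wf where "wf \<alpha> = Wv x \<alpha> (xs0 \<alpha>)" for \<alpha>
  have indep: "Wv x \<alpha> xa = wf \<alpha>" if a: "\<alpha> > 0" and xa: "xa \<in> Rmin A R \<alpha> (A x)" for \<alpha> xa
  proof -
    have "(\<alpha>+\<alpha>) * norm (Wv x \<alpha> xa - wf \<alpha>)^2 \<le> 0"
      using M2[OF a a xa xs0[OF a]] unfolding wf_def by simp
    then have "norm (Wv x \<alpha> xa - wf \<alpha>)^2 \<le> 0" using a by (simp add: mult_le_0_iff)
    then show ?thesis by simp
  qed
  have r1: "ereal (norm (wf 1)) \<le> rho1 A R x" unfolding wf_def by (rule rho1_ge) (simp_all add: xs0)
  obtain M where M: "rho1 A R x = ereal M" using fin r1 by (cases "rho1 A R x") auto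
  have bnd: "norm (wf \<alpha>) \<le> M" if "\<alpha> > 0" for \<alpha>
    using rho1_ge[OF that xs0[OF that]] M unfolding wf_def by simp
  have mono2: "norm (wf \<alpha> - wf \<beta>)^2 \<le> norm (wf \<alpha>)^2 - norm (wf \<beta>)^2" if ab: "0 < \<alpha>" "\<alpha> \<le> \<beta>" for \<alpha> \<beta>
  proof (cases "\<alpha> = \<beta>")
    case True then show ?thesis by simp
  next
    case False
    then have lt: "\<alpha> < \<beta>" using ab by simp
    have b: "\<beta> > 0" using ab by simp
    let ?D = "norm (wf \<alpha> - wf \<beta>)^2" and ?E = "norm (wf \<alpha>)^2 - norm (wf \<beta>)^2"
    have H: "(\<alpha>+\<beta>) * ?D \<le> (\<beta>-\<alpha>) * ?E"
      using M2[OF ab(1) b xs0[OF ab(1)] xs0[OF b]] unfolding wf_def by simp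
    have "0 \<le> (\<alpha>+\<beta>) * ?D" using ab b by simp
    then have "0 \<le> (\<beta>-\<alpha>) * ?E" using H by linarith
    then have E0: "0 \<le> ?E" using lt by (simp add: zero_le_mult_iff)
    have "(\<beta>-\<alpha>) * ?E \<le> (\<alpha>+\<beta>) * ?E" using E0 ab by (intro mult_right_mono) auto
    then have "(\<alpha>+\<beta>) * ?D \<le> (\<alpha>+\<beta>) * ?E" using H by linarith
    then show ?thesis using ab b by (simp add: mult_le_cancel_left_pos)
  qed
  have mono: "norm (wf \<beta>)^2 \<le> norm (wf \<alpha>)^2" if "0 < \<alpha>" "\<alpha> \<le> \<beta>" for \<alpha> \<beta>
    using mono2[OF that] by (smt (verit) zero_le_power2)
  define q where "q n = norm (wf (inverse (real (Suc n))))^2" for n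
  define s where "s n = wf (inverse (real (Suc n)))" for n
  have invpos: "inverse (real (Suc n)) > 0" for n by simp
  have invmono: "inverse (real (Suc n)) \<le> inverse (real (Suc m))" if "m \<le> n" for m n
    using that by (intro le_imp_inverse_le) auto
  have "incseq q" unfolding incseq_def q_def using mono invpos invmono by blast
  moreover have "\<forall>i. q i \<le> M^2"
    unfolding q_def using bnd invpos by (intro allI power_mono) auto
  ultimately obtain L where L: "q \<longlonglongrightarrow> L" "\<And>i. q i \<le> L" by (rule incseq_convergent) blast
  have NL: "norm (wf \<alpha>)^2 \<le> L" if a: "\<alpha> > 0" for \<alpha>
  proof -
    obtain n where n: "inverse (real (Suc n)) < \<alpha>" using reals_Archimedean[OF a] by auto
    have "norm (wf \<alpha>)^2 \<le> q n" unfolding q_def using mono[OF invpos] n by simp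
    then show ?thesis using L(2)[of n] by linarith
  qed
  have close: "norm (wf \<alpha> - s m) \<le> sqrt (L - q m)" if a: "0 < \<alpha>" "\<alpha> \<le> inverse (real (Suc m))" for \<alpha> m
  proof -
    have "norm (wf \<alpha> - s m)^2 \<le> norm (wf \<alpha>)^2 - q m" unfolding s_def q_def by (rule mono2[OF a])
    also have "\<dots> \<le> L - q m" using NL[OF a(1)] by linarith
    finally show ?thesis by (rule real_le_rsqrt)
  qed
  have small: "\<exists>m. sqrt (L - q m) < e" if e: "e > 0" for e
  proof -
    obtain m where m: "\<forall>n\<ge>m. norm (q n - L) < e^2" using LIMSEQ_D[OF L(1), of "e^2"] e by auto
    then have "L - q m < e^2" by auto
    then have "sqrt (L - q m) < sqrt (e^2)" using real_sqrt_less_iff by blast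
    moreover have "sqrt (e^2) = e" using e by simp
    ultimately show ?thesis by auto
  qed
  have "Cauchy s"
  proof (rule CauchyI)
    fix e :: real assume e: "e > 0"
    obtain m0 where m0: "sqrt (L - q m0) < e/2" using small[of "e/2"] e by auto
    have "norm (s m - s m0) \<le> sqrt (L - q m0)" if "m \<ge> m0" for m
      using close[OF invpos invmono[OF that]] unfolding s_def by simp
    then have "norm (s m - s n) < e" if "m \<ge> m0" "n \<ge> m0" for m n
    proof -
      have "norm (s m - s n) = norm ((s m - s m0) - (s n - s m0))" by simp
      also have "\<dots> \<le> norm (s m - s m0) + norm (s n - s m0)" by (rule norm_triangle_ineq4)
      also have "\<dots> < e" using \<open>\<And>m. m \<ge> m0 \<Longrightarrow> norm (s m - s m0) \<le> sqrt (L - q m0)\<close>[OF that(1)]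
          \<open>\<And>m. m \<ge> m0 \<Longrightarrow> norm (s m - s m0) \<le> sqrt (L - q m0)\<close>[OF that(2)] m0 by linarith
      finally show ?thesis .
    qed
    then show "\<exists>M. \<forall>m\<ge>M. \<forall>n\<ge>M. norm (s m - s n) < e" by blast
  qed
  then obtain \<omega> where s\<omega>: "s \<longlonglongrightarrow> \<omega>" using Cauchy_convergent_iff convergent_def by blast
  have close\<omega>: "norm (\<omega> - s m) \<le> sqrt (L - q m)" for m
  proof (rule LIMSEQ_le_const2)
    show "(\<lambda>n. norm (s n - s m)) \<longlonglongrightarrow> norm (\<omega> - s m)" by (intro tendsto_intros s\<omega>)
    show "\<exists>N. \<forall>n\<ge>N. norm (s n - s m) \<le> sqrt (L - q m)"
      using close[OF invpos invmono] unfolding s_def by blast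
  qed
  have conv: "(wf \<longlongrightarrow> \<omega>) (at_right 0)"
    unfolding tendsto_iff
  proof (intro allI impI)
    fix e :: real assume e: "e > 0"
    obtain m where m: "sqrt (L - q m) < e/2" using small[of "e/2"] e by auto
    show "\<forall>\<^sub>F \<alpha> in at_right 0. dist (wf \<alpha>) \<omega> < e"
      unfolding eventually_at_right_field
    proof (intro exI[of _ "inverse (real (Suc m))"] conjI allI impI)
      show "0 < inverse (real (Suc m))" by simp
      fix \<alpha> :: real assume a: "0 < \<alpha>" "\<alpha> < inverse (real (Suc m))"
      have "dist (wf \<alpha>) \<omega> = norm ((wf \<alpha> - s m) - (\<omega> - s m))" by (simp add: dist_norm)
      also have "\<dots> \<le> norm (wf \<alpha> - s m) + norm (\<omega> - s m)" by (rule norm_triangle_ineq4)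
      also have "\<dots> < e" using close[OF a(1) less_imp_le[OF a(2)]] close\<omega>[of m] m by linarith
      finally show "dist (wf \<alpha>) \<omega> < e" .
    qed
  qed
  have sub: "adj_subgrad A R \<omega> x"
    unfolding adj_subgrad_def
  proof
    fix z
    show "R x + ereal (inner \<omega> (A (z - x))) \<le> R z"
    proof (cases "R z")
      case PInf then show ?thesis by simp
    next
      case MInf then show ?thesis using R_nm by blast
    next
      case (real rz)
      define ip where "ip = inner \<omega> (A z - A x)"
      have Azx: "A (z - x) = A z - A x" by (simp add: linear_diff[OF A_lin])
      show ?thesis
      proof (rule ccontr)
        assume nle: "\<not> R x + ereal (inner \<omega> (A (z - x))) \<le> R z"
        have "\<exists>\<delta>>0. ereal (rz - ip + \<delta>) < R x"
        proof (cases "R x")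
          case (real r)
          then have "rz < r + ip" using nle \<open>R z = ereal rz\<close> unfolding Azx ip_def by simp
          then show ?thesis using real by (intro exI[of _ "(r + ip - rz)/2"]) (simp add: field_simps)
        next
          case PInf then show ?thesis by (intro exI[of _ 1]) simp
        next
          case MInf then show ?thesis using R_nm by blast
        qed
        then obtain \<delta> where \<delta>: "\<delta> > 0" "ereal (rz - ip + \<delta>) < R x" by blast
        have "R x \<le> ereal (rz - ip + \<delta>)"
        proof (rule key[OF xm])
          fix e :: real assume e: "e > 0"
          define h where "h \<alpha> = inner (wf \<alpha>) (A z - A x + \<alpha> *\<^sub>R wf \<alpha>)" for \<alpha>
          have t1: "((\<lambda>\<alpha>. \<alpha> *\<^sub>R wf \<alpha>) \<longlongrightarrow> 0 *\<^sub>R \<omega>) (at_right 0)"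
            by (intro tendsto_intros conv)
          then have t1': "((\<lambda>\<alpha>. \<alpha> *\<^sub>R wf \<alpha>) \<longlongrightarrow> 0) (at_right 0)" by simp
          have "(h \<longlongrightarrow> inner \<omega> (A z - A x + 0)) (at_right 0)"
            unfolding h_def by (intro tendsto_intros conv t1')
          then have ht: "(h \<longlongrightarrow> ip) (at_right 0)" unfolding ip_def by simp
          have ev1: "\<forall>\<^sub>F \<alpha> in at_right 0. ip - \<delta> < h \<alpha>" using order_tendstoD(1)[OF ht] \<delta>(1) by simp
          have "((\<lambda>\<alpha>. norm (\<alpha> *\<^sub>R wf \<alpha>)) \<longlongrightarrow> 0) (at_right 0)" using tendsto_norm_zero[OF t1'] .
          then have ev2: "\<forall>\<^sub>F \<alpha> in at_right 0. norm (\<alpha> *\<^sub>R wf \<alpha>) < e" using order_tendstoD(2) e by blast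
          have ev3: "\<forall>\<^sub>F \<alpha> in at_right 0. (0::real) < \<alpha>" by (rule eventually_at_right_less)
          have "\<forall>\<^sub>F \<alpha> in at_right 0. ip - \<delta> < h \<alpha> \<and> norm (\<alpha> *\<^sub>R wf \<alpha>) < e \<and> 0 < \<alpha>"
            using ev1 ev2 ev3 by (intro eventually_conj)
          then obtain \<alpha> where \<alpha>: "ip - \<delta> < h \<alpha>" "norm (\<alpha> *\<^sub>R wf \<alpha>) < e" "0 < \<alpha>"
            using eventually_happens' [of "at_right (0::real)"] by force
          define w where "w = xs0 \<alpha>"
          have wR: "w \<in> Rmin A R \<alpha> (A x)" unfolding w_def using xs0[OF \<alpha>(3)] .
          have Aw: "A w = A x - \<alpha> *\<^sub>R wf \<alpha>" unfolding w_def wf_def using Aeq[OF \<alpha>(3)] by blast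
          have "R w + ereal (inner (wf \<alpha>) (A (z - w))) \<le> R z"
            using M1[OF \<alpha>(3) wR] unfolding adj_subgrad_def wf_def w_def by blast
          moreover have "A (z - w) = A z - A x + \<alpha> *\<^sub>R wf \<alpha>" using Aw by (simp add: linear_diff[OF A_lin])
          ultimately have Hw: "R w + ereal (h \<alpha>) \<le> ereal rz" unfolding h_def using real by simp
          obtain rw where rw: "R w = ereal rw" using Rmin_fin[OF wR] R_nm[of w] by (cases "R w") auto
          have "rw \<le> rz - ip + \<delta>" using Hw rw \<alpha>(1) by simp
          moreover have "norm (A w - A x) \<le> e" using Aw \<alpha>(2) by simp
          ultimately show "\<exists>w. R w \<le> ereal (rz - ip + \<delta>) \<and> norm (A w - A x) \<le> e" using rw by (intro exI[of _ w] conjI) simp_all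
        qed
        then show False using \<delta>(2) by simp
      qed
    qed
  qed
  have "norm \<omega> \<le> M"
  proof (rule LIMSEQ_le_const2)
    show "(\<lambda>n. norm (s n)) \<longlonglongrightarrow> norm \<omega>" by (intro tendsto_intros s\<omega>)
    show "\<exists>N. \<forall>n\<ge>N. norm (s n) \<le> M" unfolding s_def using bnd invpos by blast
  qed
  moreover have "rho1 A R x \<le> ereal (norm \<omega>)" by (rule rho1_le_subgrad[OF sub])
  ultimately have neq: "ereal (norm \<omega>) = rho1 A R x" using M by simp
  have lim: "((\<lambda>\<alpha>. (1 / \<alpha>) *\<^sub>R (A x - A (xs \<alpha>))) \<longlongrightarrow> \<omega>) (at_right 0)"
    if xs: "\<forall>\<alpha>>0. xs \<alpha> \<in> Rmin A R \<alpha> (A x)" for xs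
  proof (rule Lim_transform_eventually[OF conv])
    show "\<forall>\<^sub>F \<alpha> in at_right 0. wf \<alpha> = (1 / \<alpha>) *\<^sub>R (A x - A (xs \<alpha>))"
      using eventually_at_right_less[of "0::real"]
    proof (rule eventually_mono)
      fix \<alpha> :: real assume "0 < \<alpha>"
      then show "wf \<alpha> = (1 / \<alpha>) *\<^sub>R (A x - A (xs \<alpha>))"
        using indep[OF \<open>0 < \<alpha>\<close>, of "xs \<alpha>"] xs unfolding Wv_def by simp
    qed
  qed
  show ?thesis using sub neq lim by blast
qed

end


theorem proposition4p1:
  fixes tau :: "'a::banach topology"
    and R :: "'a \<Rightarrow> ereal"
    and A :: "'a \<Rightarrow> 'b::{real_inner, complete_space}"
    and x :: 'a
  assumes tau: "locally_convex_hausdorff tau"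
    and R_pc: "proper_convex R"
    and R_cpt: "\<forall>c::real. compactin tau {z. R z \<le> ereal c}"
    and A_lin: "linear A"
    and A_cont: "continuous_map tau weak_top A"
    and x_min: "R x = Inf {R z | z. A z = A x}"
  shows "rho1 A R x = Inf {ereal (norm \<omega>) | \<omega>. adj_subgrad A R \<omega> x}
    \<and> (rho1 A R x \<noteq> \<infinity> \<longrightarrow>
         (\<exists>\<omega>. adj_subgrad A R \<omega> x \<and> ereal (norm \<omega>) = rho1 A R x
            \<and> (\<forall>\<omega>'. adj_subgrad A R \<omega>' x \<and> ereal (norm \<omega>') = rho1 A R x \<longrightarrow> \<omega>' = \<omega>)
            \<and> (\<forall>xs :: real \<Rightarrow> 'a. (\<forall>\<alpha>>0. xs \<alpha> \<in> Rmin A R \<alpha> (A x)) \<longrightarrow>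
                 limitin weak_top (\<lambda>\<alpha>. (1 / \<alpha>) *\<^sub>R (A x - A (xs \<alpha>))) \<omega> (at_right 0))))"
proof -
  interpret setting tau R A by (rule setting.intro[OF tau R_pc R_cpt A_lin A_cont])
  let ?S = "{ereal (norm \<omega>) | \<omega>. adj_subgrad A R \<omega> x}"
  have le1: "rho1 A R x \<le> Inf ?S"
    by (rule Inf_greatest) (auto intro: rho1_le_subgrad)
  show ?thesis
  proof (cases "rho1 A R x = \<infinity>")
    case True
    then show ?thesis using le1 by simp
  next
    case False
    obtain \<omega> where \<omega>: "adj_subgrad A R \<omega> x" "ereal (norm \<omega>) = rho1 A R x"
      "\<And>xs. (\<forall>\<alpha>>0. xs \<alpha> \<in> Rmin A R \<alpha> (A x)) \<Longrightarrow> ((\<lambda>\<alpha>. (1 / \<alpha>) *\<^sub>R (A x - A (xs \<alpha>))) \<longlongrightarrow> \<omega>) (at_right 0)"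
      using construct[OF x_min False] by blast
    have "Inf ?S \<le> ereal (norm \<omega>)" using \<omega>(1) by (intro Inf_lower) blast
    then have eq: "rho1 A R x = Inf ?S" using le1 \<omega>(2) by simp
    have uniq: "\<omega>' = \<omega>" if h: "adj_subgrad A R \<omega>' x" "ereal (norm \<omega>') = rho1 A R x" for \<omega>'
    proof -
      have nn: "norm \<omega>' = norm \<omega>" using h(2) \<omega>(2) by (metis ereal.inject)
      have "rho1 A R x \<le> ereal (norm ((1/2) *\<^sub>R (\<omega> + \<omega>')))"
        by (rule rho1_le_subgrad[OF mid_subgrad[OF \<omega>(1) h(1)]])
      then have "norm \<omega> \<le> norm ((1/2) *\<^sub>R (\<omega> + \<omega>'))" using \<omega>(2) by (metis ereal_less_eq(3))
      then have "norm \<omega>^2 \<le> norm ((1/2) *\<^sub>R (\<omega> + \<omega>'))^2" by (intro power_mono) auto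
      also have "\<dots> = (norm \<omega>^2 + norm \<omega>'^2)/2 - norm (\<omega> - \<omega>')^2/4" by (rule para_mid)
      finally have "norm (\<omega> - \<omega>')^2 \<le> 0" using nn by simp
      then show ?thesis by simp
    qed
    show ?thesis
      using eq \<omega>(1,2) uniq weak_limit[OF \<omega>(3)] by blast
  qed
qed

end
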